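(* Let $\succ=(\succ_s)_{s\in S}$ be a priority profile with every $\succ_s$ a partial order on $I$, and let $\mu_1,\dots,\mu_K$ ($K\ge1$) be stable matchings for $\succ$ such that $\mu_{k'}$ Pareto dominates $\mu_k$ for all $1\le k<k'\le K$. For each $k$ and $s\in S$ let $A_s^k=\{(i,j)\in I\times I:\ \mu_k(i)=s\ \text{and}\ sP_j\mu_k(j)\}$, and let $\succ'_s=\succ_s\cup\bigcup_{k=1}^K A_s^k$. Then for every $s\in S$, $\succ'_s$ is asymmetric and acyclic.
   Context: A binary relation $B$ on $X$ is asymmetric if $(x,y)\in B$ implies $(y,x)\notin B$; transitive if $(x,y),(y,z)\in B$ imply $(x,z)\in B$; acyclic if for all $K\ge2$ and $x_0,\dots,x_K\in X$, [$(x_{k-1},x_k)\in B$ and $(x_k,x_{k-1})\notin B$ for all $k$] implies $(x_K,x_0)\notin B$. A partial order is an asymmetric transitive relation. School choice setup: $I$ is a finite set of students with $|I|\ge 3$, $S$ a finite set of schools. Each student $i$ has a total order $P_i$ on $S\cup\{\emptyset\}$; $sR_is'$ means $sP_is'$ or $s=s'$. Each school $s$ has capacity $q_s\in\mathbb{Z}_{++}$ and an asymmetric priority relation $\succ_s$ on $I$. A matching $\mu$ assigns each $i$ to $\mu(i)\in S\cup\{\emptyset\}$, $\mu(s)=\{i:\mu(i)=s\}$, $|\mu(s)|\le q_s$. $\mu$ is stable for $\succ$ if it is individually rational ($\mu(i)R_i\emptyset$ for all $i$), non-wasteful ($sP_i\mu(i)$ implies $|\mu(s)|=q_s$) and fair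 (no $s$, $j\in\mu(s)$, $i\notin\mu(s)$ with $sR_i\mu(i)$ and $(i,j)\in\succ_s$). $\mu$ is Pareto dominated by $\mu'$ if $\mu'(i)R_i\mu(i)$ for all $i$ and $\mu'(i)P_i\mu(i)$ for some $i$. *)

theory Defs
  imports Main
begin

definition asym_on :: "'a set \<Rightarrow> ('a \<times> 'a) set \<Rightarrow> bool" where
  "asym_on X B \<longleftrightarrow> (\<forall>x\<in>X. \<forall>y\<in>X. (x,y) \<in> B \<longrightarrow> (y,x) \<notin> B)"

definition trans_on :: "'a set \<Rightarrow> ('a \<times> 'a) set \<Rightarrow> bool" where
  "trans_on X B \<longleftrightarrow> (\<forall>x\<in>X. \<forall>y\<in>X. \<forall>z\<in>X. (x,y) \<in> B \<longrightarrow> (y,z) \<in> B \<longrightarrow> (x,z) \<in> B)"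

definition acyclic_on :: "'a set \<Rightarrow> ('a \<times> 'a) set \<Rightarrow> bool" where
  "acyclic_on X B \<longleftrightarrow> (\<forall>K::nat. \<forall>x::nat \<Rightarrow> 'a. K \<ge> 2 \<longrightarrow> (\<forall>k\<le>K. x k \<in> X) \<longrightarrow>
      (\<forall>k\<in>{1..K}. (x (k-1), x k) \<in> B \<and> (x k, x (k-1)) \<notin> B) \<longrightarrow> (x K, x 0) \<notin> B)"

definition partial_order_on' :: "'a set \<Rightarrow> ('a \<times> 'a) set \<Rightarrow> bool" where
  "partial_order_on' X B \<longleftrightarrow> asym_on X B \<and> trans_on X B"

definition strict_total_order_on :: "'a set \<Rightarrow> ('a \<times> 'a) set \<Rightarrow> bool" where
  "strict_total_order_on X B \<longleftrightarrow> B \<subseteq> X \<times> X \<and> irrefl_on X B \<and> trans_on X B \<and>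
      (\<forall>x\<in>X. \<forall>y\<in>X. x \<noteq> y \<longrightarrow> (x,y) \<in> B \<or> (y,x) \<in> B)"

(* Outside option \<emptyset> is represented by None; school s by Some s.
   P i is the strict preference of student i on S \<union> {\<emptyset>}: (a,b) \<in> P i means a P_i b. *)
type_synonym ('i,'s) matching = "'i \<Rightarrow> 's option"

definition R :: "('i \<Rightarrow> ('s option \<times> 's option) set) \<Rightarrow> 'i \<Rightarrow> 's option \<Rightarrow> 's option \<Rightarrow> bool" where
  "R P i a b \<longleftrightarrow> (a,b) \<in> P i \<or> a = b"

definition is_matching :: "'i set \<Rightarrow> 's set \<Rightarrow> ('s \<Rightarrow> nat) \<Rightarrow> ('i,'s) matching \<Rightarrow> bool" where
  "is_matching I S q \<mu> \<longleftrightarrow> (\<forall>i\<in>I. \<mu> i = None \<or> (\<exists>s\<in>S. \<mu> i = Some s)) \<and>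
      (\<forall>s\<in>S. card {i\<in>I. \<mu> i = Some s} \<le> q s)"

definition stable :: "'i set \<Rightarrow> 's set \<Rightarrow> ('i \<Rightarrow> ('s option \<times> 's option) set) \<Rightarrow> ('s \<Rightarrow> nat)
    \<Rightarrow> ('s \<Rightarrow> ('i \<times> 'i) set) \<Rightarrow> ('i,'s) matching \<Rightarrow> bool" where
  "stable I S P q prio \<mu> \<longleftrightarrow> is_matching I S q \<mu> \<and>
     (\<forall>i\<in>I. R P i (\<mu> i) None) \<and>
     (\<forall>i\<in>I. \<forall>s\<in>S. (Some s, \<mu> i) \<in> P i \<longrightarrow> card {j\<in>I. \<mu> j = Some s} = q s) \<and>
     (\<not> (\<exists>s\<in>S. \<exists>j\<in>I. \<exists>i\<in>I. \<mu> j = Some s \<and> \<mu> i \<noteq> Some s \<and> R P i (Some s) (\<mu> i) \<and> (i,j) \<in> prio s))"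

definition pareto_dominates :: "'i set \<Rightarrow> ('i \<Rightarrow> ('s option \<times> 's option) set)
    \<Rightarrow> ('i,'s) matching \<Rightarrow> ('i,'s) matching \<Rightarrow> bool" where
  "pareto_dominates I P \<mu>' \<mu> \<longleftrightarrow> (\<forall>i\<in>I. R P i (\<mu>' i) (\<mu> i)) \<and> (\<exists>i\<in>I. (\<mu>' i, \<mu> i) \<in> P i)"

definition A_set :: "'i set \<Rightarrow> ('i \<Rightarrow> ('s option \<times> 's option) set) \<Rightarrow> ('i,'s) matching \<Rightarrow> 's \<Rightarrow> ('i \<times> 'i) set" where
  "A_set I P \<mu> s = {(i,j). i \<in> I \<and> j \<in> I \<and> \<mu> i = Some s \<and> (Some s, \<mu> j) \<in> P j}"

end

theory Submission
  imports Defs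
begin

theorem lemma2:
  fixes I :: "'i set" and S :: "'s set"
    and P :: "'i \<Rightarrow> ('s option \<times> 's option) set"
    and q :: "'s \<Rightarrow> nat"
    and prio :: "'s \<Rightarrow> ('i \<times> 'i) set"
    and \<mu> :: "nat \<Rightarrow> ('i,'s) matching"
    and K :: nat
  assumes "finite I" and "card I \<ge> 3" and "finite S"
    and "\<forall>i\<in>I. strict_total_order_on (insert None (Some ` S)) (P i)"
    and "\<forall>s\<in>S. q s > 0"
    and "\<forall>s\<in>S. prio s \<subseteq> I \<times> I \<and> partial_order_on' I (prio s)"
    and "K \<ge> 1"
    and "\<forall>k\<in>{1..K}. stable I S P q prio (\<mu> k)"
    and "\<forall>k\<in>{1..K}. \<forall>k'\<in>{1..K}. k < k' \<longrightarrow> pareto_dominates I P (\<mu> k') (\<mu> k)"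
  shows "\<forall>s\<in>S. asym_on I (prio s \<union> (\<Union>k\<in>{1..K}. A_set I P (\<mu> k) s))
              \<and> acyclic_on I (prio s \<union> (\<Union>k\<in>{1..K}. A_set I P (\<mu> k) s))"
proof
  fix s assume sS: "s \<in> S"
  define B where "B = prio s \<union> (\<Union>k\<in>{1..K}. A_set I P (\<mu> k) s)"
  define X where "X = insert None (Some ` S)"
  have PI: "\<And>i. i \<in> I \<Longrightarrow> strict_total_order_on X (P i)" using assms(4) X_def by auto
  have sX: "Some s \<in> X" using sS X_def by auto
  have prioI: "prio s \<subseteq> I \<times> I" and po: "partial_order_on' I (prio s)" using assms(6) sS by auto
  have tro: "trans_on I (prio s)" and aso: "asym_on I (prio s)" using po partial_order_on'_def by auto
  have ptrans: "(a,c) \<in> prio s" if ab: "(a,b) \<in> prio s" and bc: "(b,c) \<in> prio s" for a b c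
  proof -
    have "a \<in> I" "b \<in> I" "c \<in> I" using ab bc prioI by auto
    then show ?thesis using tro ab bc unfolding trans_on_def by blast
  qed
  have pirr: "(a,a) \<notin> prio s" for a
  proof
    assume aa: "(a,a) \<in> prio s"
    then have "a \<in> I" using prioI by auto
    then show False using aso aa unfolding asym_on_def by blast
  qed
  have stab: "\<And>k. k \<in> {1..K} \<Longrightarrow> stable I S P q prio (\<mu> k)" using assms(8) by auto
  have inX: "\<And>k i. k \<in> {1..K} \<Longrightarrow> i \<in> I \<Longrightarrow> \<mu> k i \<in> X"
  proof -
    fix k i assume "k \<in> {1..K}" "i \<in> I"
    then have "is_matching I S q (\<mu> k)" using stab unfolding stable_def by blast
    then show "\<mu> k i \<in> X" using \<open>i \<in> I\<close> X_def unfolding is_matching_def by auto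
  qed
  have irrP: "\<And>i. i \<in> I \<Longrightarrow> (Some s, Some s) \<notin> P i"
    using PI sX unfolding strict_total_order_on_def irrefl_on_def by blast
  define below where "below k j \<longleftrightarrow> (Some s, \<mu> k j) \<in> P j" for k j
  have NB: "\<And>k z w. k \<in> {1..K} \<Longrightarrow> z \<in> I \<Longrightarrow> w \<in> I \<Longrightarrow> \<mu> k z = Some s
      \<Longrightarrow> (w = z \<or> (w,z) \<in> prio s) \<Longrightarrow> \<not> below k w"
  proof -
    fix k z w assume k: "k \<in> {1..K}" and z: "z \<in> I" and w: "w \<in> I" and mz: "\<mu> k z = Some s"
      and h: "w = z \<or> (w,z) \<in> prio s"
    show "\<not> below k w"
    proof (cases "\<mu> k w = Some s")
      case True then show ?thesis using irrP w below_def by simp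
    next
      case False
      with h mz have wz: "(w,z) \<in> prio s" by auto
      have fair: "\<not> (\<exists>s\<in>S. \<exists>j\<in>I. \<exists>i\<in>I. \<mu> k j = Some s \<and> \<mu> k i \<noteq> Some s \<and> R P i (Some s) (\<mu> k i) \<and> (i,j) \<in> prio s)"
        using stab[OF k] unfolding stable_def by blast
      have "\<not> R P w (Some s) (\<mu> k w)"
      proof
        assume "R P w (Some s) (\<mu> k w)"
        then have "\<exists>s\<in>S. \<exists>j\<in>I. \<exists>i\<in>I. \<mu> k j = Some s \<and> \<mu> k i \<noteq> Some s \<and> R P i (Some s) (\<mu> k i) \<and> (i,j) \<in> prio s"
          using sS z w mz False wz by blast
        then show False using fair by blast
      qed
      then show ?thesis unfolding below_def R_def by blast
    qed
  qed
  have M: "\<And>k k' w. k \<in> {1..K} \<Longrightarrow> k' \<in> {1..K} \<Longrightarrow> k \<le> k' \<Longrightarrow> w \<in> I \<Longrightarrow> below k' w \<Longrightarrow> below k w"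
  proof -
    fix k k' w assume k: "k \<in> {1..K}" and k': "k' \<in> {1..K}" and le: "k \<le> k'" and w: "w \<in> I"
      and b: "below k' w"
    show "below k w"
    proof (cases "k = k'")
      case True then show ?thesis using b by simp
    next
      case False
      then have "pareto_dominates I P (\<mu> k') (\<mu> k)" using assms(9) k k' le by auto
      then have "R P w (\<mu> k' w) (\<mu> k w)" using w unfolding pareto_dominates_def by blast
      then show ?thesis
      proof (unfold R_def, elim disjE)
        assume "\<mu> k' w = \<mu> k w" then show ?thesis using b below_def by simp
      next
        assume "(\<mu> k' w, \<mu> k w) \<in> P w"
        moreover have "trans_on X (P w)" using PI w strict_total_order_on_def by blast
        moreover have "(Some s, \<mu> k' w) \<in> P w" using b below_def by simp
        moreover note sX inX[OF k w] inX[OF k' w]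
        ultimately have "(Some s, \<mu> k w) \<in> P w" unfolding trans_on_def by blast
        then show ?thesis using below_def by simp
      qed
    qed
  qed
  define Inv where "Inv u v \<longleftrightarrow> (u,v) \<in> prio s \<or> (\<exists>kf kl w w'. kf \<in> {1..K} \<and> kl \<in> {1..K} \<and> kf \<le> kl
     \<and> w \<in> I \<and> w' \<in> I \<and> \<mu> kf w' = Some s \<and> (u = w' \<or> (u,w') \<in> prio s) \<and> below kl w
     \<and> (w = v \<or> (w,v) \<in> prio s))" for u v
  have InvI: "Inv u v" if "kf \<in> {1..K}" "kl \<in> {1..K}" "kf \<le> kl" "w \<in> I" "w' \<in> I"
     "\<mu> kf w' = Some s" "u = w' \<or> (u,w') \<in> prio s" "below kl w" "w = v \<or> (w,v) \<in> prio s" for u v kf kl w w'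
    unfolding Inv_def using that by blast
  have BI: "B \<subseteq> I \<times> I" using prioI unfolding B_def A_set_def by auto
  have edge: "\<And>x y. (x,y) \<in> B \<Longrightarrow> (x,y) \<in> prio s \<or> (\<exists>k\<in>{1..K}. \<mu> k x = Some s \<and> below k y)"
    unfolding B_def A_set_def below_def by auto
  have tr: "(u,v) \<in> B\<^sup>+ \<Longrightarrow> Inv u v" for u v
  proof (induction rule: trancl_induct)
    case (base y)
    then show ?case using edge[OF base] BI unfolding Inv_def by blast
  next
    case (step y z)
    have yI: "y \<in> I" and zI: "z \<in> I" using step(2) BI by auto
    from edge[OF step(2)] show ?case
    proof
      assume yz: "(y,z) \<in> prio s"
      from step(3)[unfolded Inv_def] show ?case
      proof (rule disjE)
        assume "(u,y) \<in> prio s" then show ?thesis using ptrans yz Inv_def by blast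
      next
        assume "\<exists>kf kl w w'. kf \<in> {1..K} \<and> kl \<in> {1..K} \<and> kf \<le> kl \<and> w \<in> I \<and> w' \<in> I \<and> \<mu> kf w' = Some s \<and> (u = w' \<or> (u,w') \<in> prio s) \<and> below kl w \<and> (w = y \<or> (w,y) \<in> prio s)"
        then obtain kf kl w w' where H: "kf \<in> {1..K}" "kl \<in> {1..K}" "kf \<le> kl" "w \<in> I" "w' \<in> I"
          "\<mu> kf w' = Some s" "u = w' \<or> (u,w') \<in> prio s" "below kl w" "w = y \<or> (w,y) \<in> prio s" by blast
        then have "w = z \<or> (w,z) \<in> prio s" using yz ptrans by blast
        with H show ?thesis by (intro InvI[of kf kl w w']) auto
      qed
    next
      assume "\<exists>k\<in>{1..K}. \<mu> k y = Some s \<and> below k z"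
      then obtain k where k: "k \<in> {1..K}" "\<mu> k y = Some s" "below k z" by blast
      from step(3)[unfolded Inv_def] show ?case
      proof (rule disjE)
        assume "(u,y) \<in> prio s" then show ?thesis using k yI zI by (intro InvI[of k k z y]) auto
      next
        assume "\<exists>kf kl w w'. kf \<in> {1..K} \<and> kl \<in> {1..K} \<and> kf \<le> kl \<and> w \<in> I \<and> w' \<in> I \<and> \<mu> kf w' = Some s \<and> (u = w' \<or> (u,w') \<in> prio s) \<and> below kl w \<and> (w = y \<or> (w,y) \<in> prio s)"
        then obtain kf kl w w' where H: "kf \<in> {1..K}" "kl \<in> {1..K}" "kf \<le> kl" "w \<in> I" "w' \<in> I"
          "\<mu> kf w' = Some s" "u = w' \<or> (u,w') \<in> prio s" "below kl w" "w = y \<or> (w,y) \<in> prio s" by blast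
        have "\<not> below k w" using NB[OF k(1) yI H(4) k(2) H(9)] .
        then have "\<not> k \<le> kl" using M[OF k(1) H(2) _ H(4) H(8)] by blast
        then have "kf \<le> k" using H(3) by simp
        with H k zI show ?thesis by (intro InvI[of kf k z w']) auto
      qed
    qed
  qed
  have irr: "\<And>u. (u,u) \<notin> B\<^sup>+"
  proof
    fix u assume "(u,u) \<in> B\<^sup>+"
    then have "Inv u u" by (rule tr)
    then show False unfolding Inv_def
    proof (rule disjE)
      assume "(u,u) \<in> prio s" then show False using pirr by blast
    next
      assume "\<exists>kf kl w w'. kf \<in> {1..K} \<and> kl \<in> {1..K} \<and> kf \<le> kl \<and> w \<in> I \<and> w' \<in> I \<and> \<mu> kf w' = Some s \<and> (u = w' \<or> (u,w') \<in> prio s) \<and> below kl w \<and> (w = u \<or> (w,u) \<in> prio s)"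
      then obtain kf kl w w' where H: "kf \<in> {1..K}" "kl \<in> {1..K}" "kf \<le> kl" "w \<in> I" "w' \<in> I"
        "\<mu> kf w' = Some s" "u = w' \<or> (u,w') \<in> prio s" "below kl w" "w = u \<or> (w,u) \<in> prio s" by blast
      have "w = w' \<or> (w,w') \<in> prio s" using H(7) H(9) ptrans by blast
      then have "\<not> below kf w" using NB[OF H(1) H(5) H(4) H(6)] by blast
      then show False using M[OF H(1) H(2) H(3) H(4) H(8)] by blast
    qed
  qed
  have asym: "asym_on I B"
    unfolding asym_on_def using irr by (meson r_into_trancl' trancl_trans)
  have acyc: "acyclic_on I B"
    unfolding acyclic_on_def
  proof (intro allI impI)
    fix n :: nat and x :: "nat \<Rightarrow> 'i"
    assume n2: "2 \<le> n" and "\<forall>k\<le>n. x k \<in> I"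
      and ch: "\<forall>k\<in>{1..n}. (x (k - 1), x k) \<in> B \<and> (x k, x (k - 1)) \<notin> B"
    have "m \<ge> 1 \<Longrightarrow> m \<le> n \<Longrightarrow> (x 0, x m) \<in> B\<^sup>+" for m
    proof (induction m)
      case 0 then show ?case by simp
    next
      case (Suc m)
      have "Suc m \<in> {1..n}" using Suc.prems by simp
      then have e: "(x m, x (Suc m)) \<in> B" using ch by fastforce
      show ?case
      proof (cases "m = 0")
        case True then show ?thesis using e by auto
      next
        case False
        then have "(x 0, x m) \<in> B\<^sup>+" using Suc by simp
        then show ?thesis using e by auto
      qed
    qed
    then have "(x 0, x n) \<in> B\<^sup>+" using n2 by simp
    then show "(x n, x 0) \<notin> B" using irr by (meson trancl.trancl_into_trancl)
  qed
  show "asym_on I (prio s \<union> (\<Union>k\<in>{1..K}. A_set I P (\<mu> k) s)) \<and> acyclic_on I (prio s \<union> (\<Union>k\<in>{1..K}. A_set I P (\<mu> k) s))" using asym acyc B_def by simp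
qed

end
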